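(* Let $\mathcal H,\mathcal K$ be Hilbert spaces, $A$ a densely defined linear operator in $\mathcal H$ and $B$ a densely defined linear operator in $\mathcal K$. Suppose $A\dashv B$ with (possibly unbounded) intertwining operator $T$. If the resolvent set $\rho(A)$ is nonempty, then $T$ is everywhere defined and bounded.
   Context: A closed, densely defined operator $T:\mathcal H\to\mathcal K$ is called an intertwining operator for $A$ and $B$ if: (io$_0$) $D(A)\subset D(T)$ and $D(TA)=D(A)$, i.e. $\xi\in D(A)$ implies $A\xi\in D(T)$; (io$_1$) $T$ maps $D(A)$ into $D(B)$; (io$_2$) $BT\xi=TA\xi$ for all $\xi\in D(A)$. We write $A\dashv B$ ($A$ is quasi-similar to $B$) if there exists an intertwining operator $T$ for $A$ and $B$ which is injective and whose inverse $T^{-1}$ (defined on the range of $T$) is densely defined. Equivalently, $A\subseteq T^{-1}BT$ for a closed, densely defined, injective operator $T$ with dense range. *)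

theory Defs
  imports "HOL-Analysis.Analysis"
begin

class complex_vector = real_vector +
  fixes scaleC :: "complex \<Rightarrow> 'a \<Rightarrow> 'a" (infixr "*\<^sub>C" 75)
  assumes scaleC_add_right: "a *\<^sub>C (x + y) = a *\<^sub>C x + a *\<^sub>C y"
    and scaleC_add_left: "(a + b) *\<^sub>C x = a *\<^sub>C x + b *\<^sub>C x"
    and scaleC_scaleC: "a *\<^sub>C (b *\<^sub>C x) = (a * b) *\<^sub>C x"
    and scaleC_one: "1 *\<^sub>C x = x"
    and scaleR_scaleC: "scaleR r x = complex_of_real r *\<^sub>C x"

class complex_normed_vector = complex_vector + real_normed_vector +
  assumes norm_scaleC: "norm (a *\<^sub>C x) = cmod a * norm x"

class complex_inner = complex_normed_vector +
  fixes cinner :: "'a \<Rightarrow> 'a \<Rightarrow> complex"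
  assumes cinner_commute: "cinner x y = cnj (cinner y x)"
    and cinner_add_left: "cinner (x + y) z = cinner x z + cinner y z"
    and cinner_scaleC_left: "cinner (a *\<^sub>C x) y = cnj a * cinner x y"
    and cinner_self_real_nonneg: "Im (cinner x x) = 0 \<and> Re (cinner x x) \<ge> 0"
    and cinner_eq_zero_iff: "cinner x x = 0 \<longleftrightarrow> x = 0"
    and norm_eq_sqrt_cinner: "norm x = sqrt (Re (cinner x x))"

class chilbert_space = complex_inner + complete_space

text \<open>An operator from 'a to 'b is a pair (domain, action on the domain).\<close>
type_synonym ('a, 'b) lin_op = "'a set \<times> ('a \<Rightarrow> 'b)"

abbreviation dom_op :: "('a, 'b) lin_op \<Rightarrow> 'a set" where "dom_op T \<equiv> fst T"
abbreviation app_op :: "('a, 'b) lin_op \<Rightarrow> 'a \<Rightarrow> 'b" where "app_op T \<equiv> snd T"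

definition csubspace :: "'a::complex_vector set \<Rightarrow> bool" where
  "csubspace S \<longleftrightarrow> 0 \<in> S \<and> (\<forall>x\<in>S. \<forall>y\<in>S. x + y \<in> S) \<and> (\<forall>c. \<forall>x\<in>S. c *\<^sub>C x \<in> S)"

definition is_lin_op :: "('a::complex_vector, 'b::complex_vector) lin_op \<Rightarrow> bool" where
  "is_lin_op T \<longleftrightarrow> csubspace (dom_op T)
     \<and> (\<forall>x\<in>dom_op T. \<forall>y\<in>dom_op T. app_op T (x + y) = app_op T x + app_op T y)
     \<and> (\<forall>c. \<forall>x\<in>dom_op T. app_op T (c *\<^sub>C x) = c *\<^sub>C app_op T x)"

definition densely_defined :: "('a::topological_space, 'b) lin_op \<Rightarrow> bool" where
  "densely_defined T \<longleftrightarrow> closure (dom_op T) = UNIV"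

definition graph_op :: "('a, 'b) lin_op \<Rightarrow> ('a \<times> 'b) set" where
  "graph_op T = {(x, app_op T x) | x. x \<in> dom_op T}"

definition closed_op :: "('a::topological_space, 'b::topological_space) lin_op \<Rightarrow> bool" where
  "closed_op T \<longleftrightarrow> closed (graph_op T)"

definition resolvent_set :: "('a::complex_normed_vector, 'a) lin_op \<Rightarrow> complex set" where
  "resolvent_set A = {z. bij_betw (\<lambda>x. app_op A x - z *\<^sub>C x) (dom_op A) UNIV
      \<and> (\<exists>C. \<forall>x\<in>dom_op A. norm x \<le> C * norm (app_op A x - z *\<^sub>C x))}"

text \<open>Intertwining operator T for A and B (conditions io0, io1, io2), T closed and densely defined.\<close>
definition intertwining :: "('a::complex_normed_vector, 'b::complex_normed_vector) lin_op
    \<Rightarrow> ('a, 'a) lin_op \<Rightarrow> ('b, 'b) lin_op \<Rightarrow> bool" where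
  "intertwining T A B \<longleftrightarrow> is_lin_op T \<and> closed_op T \<and> densely_defined T
     \<and> dom_op A \<subseteq> dom_op T \<and> (\<forall>x\<in>dom_op A. app_op A x \<in> dom_op T)
     \<and> (\<forall>x\<in>dom_op A. app_op T x \<in> dom_op B)
     \<and> (\<forall>x\<in>dom_op A. app_op B (app_op T x) = app_op T (app_op A x))"

text \<open>Quasi-similarity via a given intertwining operator T: T injective with densely defined
  inverse (i.e. dense range).\<close>
definition quasi_similar_via :: "('a::complex_normed_vector, 'b::complex_normed_vector) lin_op
    \<Rightarrow> ('a, 'a) lin_op \<Rightarrow> ('b, 'b) lin_op \<Rightarrow> bool" where
  "quasi_similar_via T A B \<longleftrightarrow> intertwining T A B \<and> inj_on (app_op T) (dom_op T)
     \<and> closure (app_op T ` dom_op T) = UNIV"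

definition quasi_similar :: "('a::complex_normed_vector, 'a) lin_op \<Rightarrow> ('b::complex_normed_vector, 'b) lin_op \<Rightarrow> bool" where
  "quasi_similar A B \<longleftrightarrow> (\<exists>T. quasi_similar_via T A B)"

end

theory Submission
  imports Defs
begin

instance chilbert_space \<subseteq> banach ..

lemma cg_step1:
  fixes f :: "'a::banach \<Rightarrow> 'b::banach"
  shows "\<exists>n x0 r. r > 0 \<and> ball x0 r \<subseteq> closure {x. norm (f x) \<le> real n}"
proof -
  define X where "X n = {x. norm (f x) \<le> real n}" for n
  have "\<exists>n. interior (closure (X n)) \<noteq> {}"
  proof (rule ccontr)
    assume "\<not> ?thesis"
    hence "euclidean interior_of \<Union>(range (\<lambda>n. closure (X n))) = {}"
      by (intro Baire_category_alt) (auto simp: completely_metrizable_space_euclidean closed_closedin[symmetric])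
    moreover have "\<Union>(range (\<lambda>n. closure (X n))) = UNIV"
    proof -
      { fix x :: 'a
        obtain n where "norm (f x) \<le> real n" using real_arch_simple by blast
        hence "x \<in> X n" by (simp add: X_def)
        hence "x \<in> closure (X n)" by (rule closure_subset[THEN subsetD])
        hence "x \<in> \<Union>(range (\<lambda>n. closure (X n)))" by blast }
      thus ?thesis by blast
    qed
    ultimately show False by simp
  qed
  then obtain n x0 where "x0 \<in> interior (closure (X n))" by blast
  then obtain r where "r > 0" "ball x0 r \<subseteq> closure (X n)"
    using mem_interior by blast
  thus ?thesis unfolding X_def by blast
qed

lemma cg_step2:
  fixes f :: "'a::banach \<Rightarrow> 'b::banach"
  assumes lin: "linear f"
  shows "\<exists>M\<ge>0. \<forall>u e. e > 0 \<longrightarrow> (\<exists>v. norm (u - v) < e \<and> norm (f v) \<le> M * norm u)"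
proof -
  obtain n x0 r where r: "r > 0" and B: "ball x0 r \<subseteq> closure {x. norm (f x) \<le> real n}"
    using cg_step1 by blast
  have A: "\<exists>v. norm (u - v) < e \<and> norm (f v) \<le> real n" if "norm u < r" "e > 0" for u e
  proof -
    have "x0 + u \<in> closure {x. norm (f x) \<le> real n}" using B that by (auto simp: dist_norm)
    then obtain a where a: "norm (f a) \<le> real n" "dist a (x0 + u) < e"
      using \<open>e > 0\<close> unfolding closure_approachable by blast
    have "x0 - u \<in> closure {x. norm (f x) \<le> real n}" using B that by (auto simp: dist_norm)
    then obtain b where b: "norm (f b) \<le> real n" "dist b (x0 - u) < e"
      using \<open>e > 0\<close> unfolding closure_approachable by blast
    define v where "v = (1/2) *\<^sub>R (a - b)"
    have e1: "(x0 + u - a) - (x0 - u - b) = 2 *\<^sub>R u - (a - b)"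
      by (simp add: algebra_simps scaleR_2)
    have "u - v = (1/2) *\<^sub>R (2 *\<^sub>R u - (a - b))"
      unfolding v_def by (simp add: algebra_simps)
    hence "u - v = (1/2) *\<^sub>R ((x0 + u - a) - (x0 - u - b))" using e1 by simp
    hence "norm (u - v) = \<bar>1/2\<bar> * norm ((x0 + u - a) - (x0 - u - b))"
      by (simp only: norm_scaleR)
    moreover have "norm ((x0 + u - a) - (x0 - u - b)) \<le> norm (x0 + u - a) + norm (x0 - u - b)"
      by (rule norm_triangle_ineq4)
    ultimately have "norm (u - v) \<le> (1/2) * (norm (x0 + u - a) + norm (x0 - u - b))"
      by simp
    also have "\<dots> < e" using a b by (simp add: dist_norm norm_minus_commute)
    finally have 1: "norm (u - v) < e" .
    have "f v = (1/2) *\<^sub>R (f a - f b)" unfolding v_def using lin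
      by (simp add: linear_scale linear_diff)
    hence "norm (f v) \<le> (1/2) * (norm (f a) + norm (f b))"
      by (simp add: norm_triangle_ineq4)
    also have "\<dots> \<le> real n" using a b by simp
    finally show ?thesis using 1 by blast
  qed
  define M where "M = 2 * real n / r"
  have "M \<ge> 0" using r by (simp add: M_def)
  moreover have "\<exists>v. norm (u - v) < e \<and> norm (f v) \<le> M * norm u" if "e > 0" for u e
  proof (cases "u = 0")
    case True thus ?thesis using that lin by (intro exI[of _ 0]) (simp add: linear_0)
  next
    case False
    define t where "t = r / (2 * norm u)"
    have t: "t > 0" using False r by (simp add: t_def)
    have "norm (t *\<^sub>R u) < r" using False r by (simp add: t_def)
    then obtain v' where v': "norm (t *\<^sub>R u - v') < e * t" "norm (f v') \<le> real n"
      using A[of "t *\<^sub>R u" "e * t"] t \<open>e > 0\<close> by auto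
    define v where "v = (1/t) *\<^sub>R v'"
    have "u - v = (1/t) *\<^sub>R (t *\<^sub>R u - v')" using t by (simp add: v_def algebra_simps)
    hence "norm (u - v) = norm (t *\<^sub>R u - v') / t" using t by simp
    also have "\<dots> < e" using v' t by (simp add: divide_less_eq mult.commute)
    finally have 1: "norm (u - v) < e" .
    have "norm (f v) = norm (f v') / t" unfolding v_def using lin t by (simp add: linear_scale)
    also have "\<dots> \<le> real n / t" using v' t by (simp add: divide_right_mono)
    also have "\<dots> = M * norm u" using False r by (simp add: t_def M_def)
    finally show ?thesis using 1 by blast
  qed
  ultimately show ?thesis by blast
qed

lemma cg_bounded:
  fixes f :: "'a::banach \<Rightarrow> 'b::banach"
  assumes lin: "linear f" and cl: "closed {(x, f x) | x. True}"
  shows "\<exists>C. \<forall>x. norm (f x) \<le> C * norm x"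
proof -
  obtain M where M: "M \<ge> 0" "\<And>u e. e>0 \<Longrightarrow> \<exists>v. norm (u - v) < e \<and> norm (f v) \<le> M * norm u"
    using cg_step2[OF lin] by blast
  define g where "g u e = (SOME v. norm (u - v) < e \<and> norm (f v) \<le> M * norm u)" for u e
  have g: "norm (u - g u e) < e \<and> norm (f (g u e)) \<le> M * norm u" if "e > 0" for u e
    unfolding g_def by (rule someI_ex[OF M(2)[OF that]])
  have "norm (f x) \<le> 2 * M * norm x" for x
  proof (cases "x = 0")
    case True thus ?thesis using lin by (simp add: linear_0)
  next
    case False
    define e where "e = norm x"
    have e: "e > 0" using False by (simp add: e_def)
    define w where "w = rec_nat x (\<lambda>k wk. wk - g wk (e * (1/2)^Suc k))"
    have w0: "w 0 = x" and wS: "w (Suc k) = w k - g (w k) (e * (1/2)^Suc k)" for k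
      by (simp_all add: w_def)
    define v where "v k = g (w k) (e * (1/2)^Suc k)" for k
    have nw: "norm (w k) \<le> e * (1/2)^k" for k
    proof (induction k)
      case 0 thus ?case by (simp add: w0 e_def)
    next
      case (Suc k)
      have "e * (1/2)^Suc k > 0" using e by simp
      from g[OF this, of "w k"] show ?case by (simp add: wS)
    qed
    define b where "b i = M * e * (1/2)^i" for i
    have nfv: "norm (f (v k)) \<le> b k" for k
    proof -
      have "e * (1/2)^Suc k > 0" using e by simp
      from g[OF this, of "w k"] have "norm (f (v k)) \<le> M * norm (w k)" by (simp add: v_def)
      also have "\<dots> \<le> M * (e * (1/2)^k)" using nw[of k] M(1) by (rule mult_left_mono)
      finally show ?thesis by (simp add: b_def)
    qed
    have bsum: "summable b" unfolding b_def by (intro summable_mult summable_geometric) simp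
    have bval: "suminf b = 2 * M * e" unfolding b_def
      by (subst suminf_mult) (simp_all add: suminf_geometric)
    have psum: "(\<Sum>i<k. v i) = x - w k" for k
      by (induction k) (simp_all add: w0 wS v_def)
    have "(\<lambda>k. e * (1/2)^k) \<longlonglongrightarrow> 0"
      by (intro tendsto_mult_right_zero LIMSEQ_realpow_zero) simp_all
    hence wlim: "w \<longlonglongrightarrow> 0"
      by (rule Lim_null_comparison[rotated]) (simp add: nw)
    have slim: "(\<lambda>k. \<Sum>i<k. v i) \<longlonglongrightarrow> x"
      unfolding psum using tendsto_diff[OF tendsto_const[of x] wlim] by simp
    have summ: "summable (\<lambda>i. f (v i))"
      using summable_comparison_test'[of b 0 "\<lambda>i. f (v i)"] bsum nfv by blast
    have flim: "(\<lambda>k. f (\<Sum>i<k. v i)) \<longlonglongrightarrow> suminf (\<lambda>i. f (v i))"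
      using summable_LIMSEQ[OF summ] by (simp add: linear_sum[OF lin])
    have pl: "(\<lambda>k. ((\<Sum>i<k. v i), f (\<Sum>i<k. v i))) \<longlonglongrightarrow> (x, suminf (\<lambda>i. f (v i)))"
      by (rule tendsto_Pair[OF slim flim])
    have pm: "((\<Sum>i<k. v i), f (\<Sum>i<k. v i)) \<in> {(x, f x) | x. True}" for k by simp
    have "(x, suminf (\<lambda>i. f (v i))) \<in> {(x, f x) | x. True}"
      by (rule closed_sequentially[OF cl pm pl])
    hence fx: "f x = suminf (\<lambda>i. f (v i))" by simp
    have pb: "norm (f (\<Sum>i<k. v i)) \<le> 2 * M * e" for k
    proof -
      have "norm (f (\<Sum>i<k. v i)) = norm (\<Sum>i<k. f (v i))" by (simp add: linear_sum[OF lin])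
      also have "\<dots> \<le> (\<Sum>i<k. norm (f (v i)))" by (rule norm_sum)
      also have "\<dots> \<le> (\<Sum>i<k. b i)" by (intro sum_mono nfv)
      also have "\<dots> \<le> suminf b"
        by (rule sum_le_suminf[OF bsum]) (auto simp: b_def M(1) e less_imp_le)
      finally show ?thesis using bval by simp
    qed
    have "norm (f x) \<le> 2 * M * e"
      unfolding fx by (rule LIMSEQ_le_const2[OF tendsto_norm[OF flim]]) (simp add: pb)
    thus ?thesis by (simp add: e_def)
  qed
  thus ?thesis by blast
qed

lemma scaleC_neg_aux: "(- z) *\<^sub>C (x::'a::complex_vector) = - (z *\<^sub>C x)"
proof -
  have z0: "0 *\<^sub>C x = 0"
    using scaleR_scaleC[of 0 x] by simp
  have "z *\<^sub>C x + (- z) *\<^sub>C x = 0"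
    using scaleC_add_left[of z "- z" x, symmetric] z0 by simp
  thus ?thesis by (simp add: eq_neg_iff_add_eq_0 add.commute)
qed

theorem mainTheorem1:
  fixes A :: "('a::chilbert_space, 'a) lin_op"
    and B :: "('b::chilbert_space, 'b) lin_op"
    and T :: "('a, 'b) lin_op"
  assumes "is_lin_op A" and "densely_defined A"
    and "is_lin_op B" and "densely_defined B"
    and "quasi_similar_via T A B"
    and "resolvent_set A \<noteq> {}"
  shows "dom_op T = UNIV \<and> (\<exists>C. \<forall>x. norm (app_op T x) \<le> C * norm x)"
proof -
  have it: "intertwining T A B" using assms(5) by (simp add: quasi_similar_via_def)
  hence linT: "is_lin_op T" and clT: "closed_op T" and dA: "dom_op A \<subseteq> dom_op T"
    and AT: "\<forall>x\<in>dom_op A. app_op A x \<in> dom_op T"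
    by (simp_all add: intertwining_def)
  have sub: "csubspace (dom_op T)" and addT: "\<forall>x\<in>dom_op T. \<forall>y\<in>dom_op T. app_op T (x + y) = app_op T x + app_op T y"
    and sclT: "\<forall>c. \<forall>x\<in>dom_op T. app_op T (c *\<^sub>C x) = c *\<^sub>C app_op T x"
    using linT by (simp_all add: is_lin_op_def)
  obtain z where "z \<in> resolvent_set A" using assms(6) by blast
  hence bij: "bij_betw (\<lambda>x. app_op A x - z *\<^sub>C x) (dom_op A) UNIV"
    by (simp add: resolvent_set_def)
  have domT: "dom_op T = UNIV"
  proof (intro set_eqI iffI)
    fix y :: 'a
    have "y \<in> (\<lambda>x. app_op A x - z *\<^sub>C x) ` dom_op A" using bij by (simp add: bij_betw_def)
    then obtain \<xi> where xi: "\<xi> \<in> dom_op A" and y: "y = app_op A \<xi> - z *\<^sub>C \<xi>" by blast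
    have 1: "app_op A \<xi> \<in> dom_op T" using AT xi by blast
    have 2: "(- z) *\<^sub>C \<xi> \<in> dom_op T" using sub dA xi unfolding csubspace_def by blast
    have "app_op A \<xi> + (- z) *\<^sub>C \<xi> \<in> dom_op T" using sub 1 2 unfolding csubspace_def by blast
    thus "y \<in> dom_op T" using y by (simp add: scaleC_neg_aux)
  qed simp
  have lin: "linear (app_op T)"
  proof (rule linearI)
    fix x y show "app_op T (x + y) = app_op T x + app_op T y" using addT domT by simp
  next
    fix r :: real and x
    show "app_op T (r *\<^sub>R x) = r *\<^sub>R app_op T x"
      using sclT domT by (simp add: scaleR_scaleC)
  qed
  have "graph_op T = {(x, app_op T x) | x. True}"
    using domT by (simp add: graph_op_def)
  hence cl: "closed {(x, app_op T x) | x. True}" using clT by (simp add: closed_op_def)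
  show ?thesis using cg_bounded[OF lin cl] domT by blast
qed

end
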